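(* Let $p>0$, let $n$ be a positive integer and let $0<a_n\leq\dots\leq a_1$ be reals with $\sum_{i=1}^n a_i^p=1$. Then for all $0\leq m\leq n$ and $q\geq p$, $$\left(\sum_{i=m+1}^n a_i^q\right)^{1/q}\leq\frac{(p/q)^{1/q}(1-p/q)^{1/p-1/q}}{m^{1/p-1/q}}.$$ In particular, for every $\varepsilon>0$ there exists $C=C(\varepsilon)$ such that for all $q\geq p+\varepsilon$, $$\left(\sum_{i=m+1}^n a_i^q\right)^{1/q}\leq\frac{C}{m^{1/p-1/q}}.$$ *)

theory Defs
  imports Complex_Main
begin

text \<open>Real power with the usual convention x^0 = 1 (in particular 0^0 = 1);
  Isabelle's powr has 0 powr 0 = 0, which would distort the case q = p.\<close>
definition rpow :: "real \<Rightarrow> real \<Rightarrow> real" where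
  "rpow x y = (if y = 0 then 1 else x powr y)"

end

theory Submission imports Defs "HOL-Analysis.Analysis" begin
lemma key:
  fixes A s :: real
  assumes "0 \<le> A" "A \<le> 1" "0 < s" "s < 1"
  shows "A powr ((1-s)/s) * (1-A) \<le> (1-s) powr ((1-s)/s) * s"
proof (cases "A = 0 \<or> A = 1")
  case True
  then show ?thesis using assms by (auto intro!: mult_nonneg_nonneg)
next
  case False
  hence A: "0 < A" "A < 1" using assms by auto
  have y: "(A/(1-s)) powr (1-s) * ((1-A)/s) powr s \<le> (1-s)*(A/(1-s)) + s*((1-A)/s)"
    by (rule Youngs_inequality_0) (use assms A in auto)
  also have "\<dots> = 1" using assms by (simp add: field_simps)
  finally have "((A/(1-s)) powr (1-s) * ((1-A)/s) powr s) powr (1/s) \<le> 1 powr (1/s)"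
    using assms A by (intro powr_mono2) auto
  hence "(A/(1-s)) powr ((1-s)/s) * ((1-A)/s) \<le> 1"
    using assms A by (simp add: powr_mult powr_powr)
  hence "(A powr ((1-s)/s) / (1-s) powr ((1-s)/s)) * ((1-A)/s) \<le> 1"
    using assms A by (simp add: powr_divide)
  then show ?thesis using assms A by (simp add: field_simps)
qed

lemma mainq:
  fixes p q :: real and a :: "nat \<Rightarrow> real" and n m :: nat
  assumes p: "p > 0" and q: "q > p" and m1: "1 \<le> m" and mn: "m \<le> n"
    and pos: "\<forall>i. 1 \<le> i \<and> i \<le> n \<longrightarrow> a i > 0"
    and mono: "\<forall>i j. 1 \<le> i \<and> i \<le> j \<and> j \<le> n \<longrightarrow> a j \<le> a i"
    and sum1: "(\<Sum>i=1..n. a i powr p) = 1"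
  shows "(\<Sum>i=m+1..n. a i powr q) \<le> (1 - p/q) powr ((1-p/q)/(p/q)) * (p/q) / real m powr ((1-p/q)/(p/q))"
proof (cases "m = n")
  case True
  then show ?thesis using p q by (auto intro!: divide_nonneg_pos mult_nonneg_nonneg)
next
  case False
  define s where "s = p/q"
  have s: "0 < s" "s < 1" using p q by (auto simp: s_def)
  define e where "e = (1-s)/s"
  have e: "e = (q-p)/p" using p q by (simp add: e_def s_def field_simps)
  have epos: "e > 0" using p q e by simp
  define t where "t = a (m+1) powr p"
  define A where "A = (\<Sum>i=1..m. a i powr p)"
  define B where "B = (\<Sum>i=m+1..n. a i powr p)"
  have AB: "A + B = 1"
  proof -
    have "{1..n} = {1..m} \<union> {m+1..n}" using mn m1 by auto
    hence "(\<Sum>i=1..n. a i powr p) = A + B" unfolding A_def B_def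
      by (simp add: sum.union_disjoint ivl_disj_int)
    thus ?thesis using sum1 by simp
  qed
  have A0: "0 \<le> A" unfolding A_def by (intro sum_nonneg) auto
  have B0: "0 \<le> B" unfolding B_def by (intro sum_nonneg) auto
  have mn': "m + 1 \<le> n" using False mn by simp
  have am: "a (m+1) > 0" using pos mn' by auto
  have t0: "t \<ge> 0" unfolding t_def by simp
  have "(\<Sum>i=m+1..n. a i powr q) \<le> (\<Sum>i=m+1..n. a i powr p * t powr e)"
  proof (rule sum_mono)
    fix i assume i: "i \<in> {m+1..n}"
    have ai: "a i > 0" "a i \<le> a (m+1)" using pos mono i m1 by auto
    have "a i powr q = a i powr p * a i powr (q-p)" by (simp add: powr_add[symmetric])
    also have "a i powr (q - p) \<le> a (m+1) powr (q-p)" using ai q by (intro powr_mono2) auto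
    hence "a i powr p * a i powr (q-p) \<le> a i powr p * a (m+1) powr (q-p)"
      by (intro mult_left_mono) auto
    also have "a (m+1) powr (q-p) = t powr e" unfolding t_def e using p am
      by (simp add: powr_powr)
    finally show "a i powr q \<le> a i powr p * t powr e" .
  qed
  also have "\<dots> = t powr e * B" unfolding B_def by (simp add: sum_distrib_left mult.commute)
  also have "\<dots> \<le> (A / m) powr e * B"
  proof -
    have "(\<Sum>i=1..m. t) \<le> A" unfolding A_def
    proof (rule sum_mono)
      fix i assume i: "i \<in> {1..m}"
      have "a (m+1) \<le> a i" using mono i mn' by auto
      thus "t \<le> a i powr p" unfolding t_def using am p by (intro powr_mono2) auto
    qed
    hence "m * t \<le> A" by simp
    hence "t \<le> A / m" using m1 by (simp add: field_simps)
    hence "t powr e \<le> (A/m) powr e" using t0 epos by (intro powr_mono2) auto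
    thus ?thesis using B0 by (intro mult_right_mono) auto
  qed
  also have "\<dots> = (A powr e * (1 - A)) / m powr e" using AB A0 by (simp add: powr_divide)
  also have "\<dots> \<le> ((1-s) powr e * s) / m powr e"
    unfolding e_def using key[of A s] A0 AB B0 s m1 by (intro divide_right_mono) auto
  finally show ?thesis unfolding e_def s_def .
qed

lemma part1:
  fixes p q :: real and a :: "nat \<Rightarrow> real" and n m :: nat
  assumes p: "p > 0" and q: "q \<ge> p" and mq: "m \<ge> 1 \<or> q = p" and mn: "m \<le> n"
    and pos: "\<forall>i. 1 \<le> i \<and> i \<le> n \<longrightarrow> a i > 0"
    and mono: "\<forall>i j. 1 \<le> i \<and> i \<le> j \<and> j \<le> n \<longrightarrow> a j \<le> a i"
    and sum1: "(\<Sum>i=1..n. a i powr p) = 1"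
  shows "(\<Sum>i=m+1..n. a i powr q) powr (1/q)
         \<le> (p/q) powr (1/q) * rpow (1 - p/q) (1/p - 1/q) / rpow (real m) (1/p - 1/q)"
proof (cases "q = p")
  case True
  have "(\<Sum>i=m+1..n. a i powr p) \<le> (\<Sum>i=1..n. a i powr p)"
    by (rule sum_mono2) auto
  hence "(\<Sum>i=m+1..n. a i powr p) powr (1/p) \<le> 1 powr (1/p)"
    using sum1 p by (intro powr_mono2) (auto intro: sum_nonneg)
  then show ?thesis using True p by (simp add: rpow_def)
next
  case False
  hence q': "q > p" "m \<ge> 1" using q mq by auto
  define d where "d = 1/p - 1/q"
  have dpos: "d > 0" using q' p by (simp add: d_def field_simps)
  define s where "s = p/q"
  have s: "0 < s" "s < 1" using p q' by (auto simp: s_def)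
  have ed: "((1-s)/s) * (1/q) = d" using p q' by (simp add: s_def d_def field_simps)
  have S: "(\<Sum>i=m+1..n. a i powr q) \<le> (1-s) powr ((1-s)/s) * s / real m powr ((1-s)/s)"
    unfolding s_def using mainq[OF p q'(1) q'(2) mn pos mono sum1] .
  have "(\<Sum>i=m+1..n. a i powr q) powr (1/q) \<le> ((1-s) powr ((1-s)/s) * s / real m powr ((1-s)/s)) powr (1/q)"
    using S p q' by (intro powr_mono2) (auto intro: sum_nonneg)
  also have "\<dots> = (1-s) powr d * s powr (1/q) / real m powr d"
    using s q' p by (simp add: powr_mult powr_divide powr_powr ed[simplified])
  finally have F: "(\<Sum>i=m+1..n. a i powr q) powr (1/q) \<le> (1-s) powr d * s powr (1/q) / real m powr d" .
  have r1: "rpow (1-p/q) (1/p-1/q) = (1-s) powr d" "rpow (real m) (1/p-1/q) = real m powr d"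
    using dpos q' by (simp_all add: rpow_def d_def s_def)
  show ?thesis unfolding r1 using F unfolding s_def by (simp add: mult.commute)
qed

theorem lemma7p4:
  fixes p :: real
  assumes p_pos: "p > 0"
  shows
   "(\<forall>(n::nat) (a::nat \<Rightarrow> real) (m::nat) (q::real).
       n \<ge> 1 \<longrightarrow>
       (\<forall>i. 1 \<le> i \<and> i \<le> n \<longrightarrow> a i > 0) \<longrightarrow>
       (\<forall>i j. 1 \<le> i \<and> i \<le> j \<and> j \<le> n \<longrightarrow> a j \<le> a i) \<longrightarrow>
       (\<Sum>i=1..n. a i powr p) = 1 \<longrightarrow>
       m \<le> n \<longrightarrow> q \<ge> p \<longrightarrow> (m \<ge> 1 \<or> q = p) \<longrightarrow>
       (\<Sum>i=m+1..n. a i powr q) powr (1/q)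
         \<le> (p/q) powr (1/q) * rpow (1 - p/q) (1/p - 1/q) / rpow (real m) (1/p - 1/q))
    \<and>
    (\<forall>\<epsilon>>0. \<exists>C::real. \<forall>(n::nat) (a::nat \<Rightarrow> real) (m::nat) (q::real).
       n \<ge> 1 \<longrightarrow>
       (\<forall>i. 1 \<le> i \<and> i \<le> n \<longrightarrow> a i > 0) \<longrightarrow>
       (\<forall>i j. 1 \<le> i \<and> i \<le> j \<and> j \<le> n \<longrightarrow> a j \<le> a i) \<longrightarrow>
       (\<Sum>i=1..n. a i powr p) = 1 \<longrightarrow>
       1 \<le> m \<longrightarrow> m \<le> n \<longrightarrow> q \<ge> p + \<epsilon> \<longrightarrow>
       (\<Sum>i=m+1..n. a i powr q) powr (1/q) \<le> C / (real m) powr (1/p - 1/q))"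
proof (intro conjI allI impI)
  fix n a m q
  assume "n \<ge> (1::nat)" "\<forall>i. 1 \<le> i \<and> i \<le> n \<longrightarrow> a i > (0::real)"
    "\<forall>i j. 1 \<le> i \<and> i \<le> j \<and> j \<le> n \<longrightarrow> a j \<le> a i" "(\<Sum>i=1..n. a i powr p) = 1"
    "m \<le> n" "q \<ge> p" "m \<ge> 1 \<or> q = p"
  thus "(\<Sum>i=m+1..n. a i powr q) powr (1/q)
         \<le> (p/q) powr (1/q) * rpow (1 - p/q) (1/p - 1/q) / rpow (real m) (1/p - 1/q)"
    using part1[OF p_pos] by blast
next
  fix \<epsilon> :: real assume eps: "\<epsilon> > 0"
  show "\<exists>C::real. \<forall>(n::nat) (a::nat \<Rightarrow> real) (m::nat) (q::real).
       n \<ge> 1 \<longrightarrow>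
       (\<forall>i. 1 \<le> i \<and> i \<le> n \<longrightarrow> a i > 0) \<longrightarrow>
       (\<forall>i j. 1 \<le> i \<and> i \<le> j \<and> j \<le> n \<longrightarrow> a j \<le> a i) \<longrightarrow>
       (\<Sum>i=1..n. a i powr p) = 1 \<longrightarrow>
       1 \<le> m \<longrightarrow> m \<le> n \<longrightarrow> q \<ge> p + \<epsilon> \<longrightarrow>
       (\<Sum>i=m+1..n. a i powr q) powr (1/q) \<le> C / (real m) powr (1/p - 1/q)"
  proof (intro exI[of _ 1] allI impI)
    fix n a m q
    assume h: "n \<ge> (1::nat)" "\<forall>i. 1 \<le> i \<and> i \<le> n \<longrightarrow> a i > (0::real)"
      "\<forall>i j. 1 \<le> i \<and> i \<le> j \<and> j \<le> n \<longrightarrow> a j \<le> a i" "(\<Sum>i=1..n. a i powr p) = 1"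
      "1 \<le> m" "m \<le> n" "q \<ge> p + \<epsilon>"
    have q: "q > p" using h eps by simp
    define d where "d = 1/p - 1/q"
    have dpos: "d > 0" using q p_pos by (simp add: d_def field_simps)
    have L: "(\<Sum>i=m+1..n. a i powr q) powr (1/q) \<le> (p/q) powr (1/q) * (1 - p/q) powr d / real m powr d"
      using part1[OF p_pos, of q m n a] h q dpos unfolding rpow_def d_def by auto
    have s: "0 < p/q" "p/q < 1" using q p_pos by auto
    have "(p/q) powr (1/q) \<le> 1" using s q p_pos by (intro powr_le1) auto
    moreover have "(1 - p/q) powr d \<le> 1" using s dpos by (intro powr_le1) auto
    ultimately have "(p/q) powr (1/q) * (1 - p/q) powr d \<le> 1"
      by (simp add: mult_le_one)
    hence "(p/q) powr (1/q) * (1 - p/q) powr d / real m powr d \<le> 1 / real m powr d"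
      using h by (intro divide_right_mono) auto
    with L show "(\<Sum>i=m+1..n. a i powr q) powr (1/q) \<le> 1 / (real m) powr (1/p - 1/q)"
      unfolding d_def by linarith
  qed
qed
end
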